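(* Let $\Sigma=(V,E)$ be a finite directed network in which every edge has capacity $1$, which is inner-superbalanced, and whose boundary is partitioned as $\partial\Sigma=A\sqcup B\sqcup C\sqcup D$. Then $$-I_3(A:B:C):=S(AB)+S(AC)+S(BC)-S(A)-S(B)-S(C)-S(ABC)\ \ge\ 0.$$
   Context: A flow on a directed network with capacities $c$ is a function $v:E\to\mathbb R_{\ge0}$ with $v^e\le c^e$ and, at every non-boundary vertex $x$, total inflow equal to total outflow. The flux of $v$ out of a boundary set $X\subset\partial\Sigma$ is $\sum_{e:s(e)\in X}v^e-\sum_{e:t(e)\in X}v^e$, where $s(e),t(e)$ are the source and target of $e$; $S(X)$ is the maximum flux out of $X$ over all flows, and juxtaposition such as $AB$ denotes the union $A\cup B$. A network is inner-superbalanced if at each non-boundary vertex the total capacity of incoming edges is at most that of outgoing edges. *)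

theory Defs
  imports Complex_Main
begin

text \<open>A directed network: vertex set V, edge set E (parallel edges allowed, since edges are
abstract objects), source map s, target map t, boundary Bd \<subseteq> V, capacity c.\<close>

definition is_flow ::
  "'v set \<Rightarrow> 'e set \<Rightarrow> ('e \<Rightarrow> 'v) \<Rightarrow> ('e \<Rightarrow> 'v) \<Rightarrow> 'v set \<Rightarrow> ('e \<Rightarrow> real) \<Rightarrow> ('e \<Rightarrow> real) \<Rightarrow> bool"
  where "is_flow V E s t Bd c f \<longleftrightarrow>
     (\<forall>e\<in>E. 0 \<le> f e \<and> f e \<le> c e) \<and>
     (\<forall>x\<in>V - Bd. (\<Sum>e\<in>{e\<in>E. t e = x}. f e) = (\<Sum>e\<in>{e\<in>E. s e = x}. f e))"

definition flux :: "'e set \<Rightarrow> ('e \<Rightarrow> 'v) \<Rightarrow> ('e \<Rightarrow> 'v) \<Rightarrow> ('e \<Rightarrow> real) \<Rightarrow> 'v set \<Rightarrow> real"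
  where "flux E s t f X = (\<Sum>e\<in>{e\<in>E. s e \<in> X}. f e) - (\<Sum>e\<in>{e\<in>E. t e \<in> X}. f e)"

text \<open>Maximum flux out of X over all flows (a maximum exists for finite networks; Sup of the
nonempty bounded set of achievable fluxes).\<close>
definition max_flux ::
  "'v set \<Rightarrow> 'e set \<Rightarrow> ('e \<Rightarrow> 'v) \<Rightarrow> ('e \<Rightarrow> 'v) \<Rightarrow> 'v set \<Rightarrow> ('e \<Rightarrow> real) \<Rightarrow> 'v set \<Rightarrow> real"
  where "max_flux V E s t Bd c X = Sup {flux E s t f X | f. is_flow V E s t Bd c f}"

definition inner_superbalanced ::
  "'v set \<Rightarrow> 'e set \<Rightarrow> ('e \<Rightarrow> 'v) \<Rightarrow> ('e \<Rightarrow> 'v) \<Rightarrow> 'v set \<Rightarrow> ('e \<Rightarrow> real) \<Rightarrow> bool"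
  where "inner_superbalanced V E s t Bd c \<longleftrightarrow>
     (\<forall>x\<in>V - Bd. (\<Sum>e\<in>{e\<in>E. t e = x}. c e) \<le> (\<Sum>e\<in>{e\<in>E. s e = x}. c e))"

end

theory Submission
  imports Defs "HOL-Library.FuncSet"
begin

definition cutv :: "'e set \<Rightarrow> ('e \<Rightarrow> 'v) \<Rightarrow> ('e \<Rightarrow> 'v) \<Rightarrow> 'v set \<Rightarrow> real" where
  "cutv E s t U = (\<Sum>e\<in>E. of_bool (s e \<in> U \<and> t e \<notin> U))"

lemma flux_alt:
  assumes "finite E"
  shows "flux E s t f Y = (\<Sum>e\<in>E. (of_bool (s e \<in> Y) - of_bool (t e \<in> Y)) * f e)"
proof -
  have "\<And>P x. (of_bool P :: real) * x = (if P then x else 0)" by simp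
  then show ?thesis using assms by (simp add: flux_def sum.inter_filter left_diff_distrib sum_subtractf)
qed

lemma flux_group:
  assumes "finite E" "finite V" "\<forall>e\<in>E. s e \<in> V \<and> t e \<in> V"
  shows "flux E s t f Y = (\<Sum>v\<in>Y \<inter> V. flux E s t f {v})"
proof -
  have 1: "(\<Sum>v\<in>Y \<inter> V. (\<Sum>e\<in>{e\<in>E. s e \<in> {v}}. f e)) = (\<Sum>e\<in>{e\<in>E. s e \<in> Y}. f e)"
  proof -
    have "(\<Sum>v\<in>Y \<inter> V. (\<Sum>e\<in>{x. x \<in> {e\<in>E. s e \<in> Y} \<and> s x = v}. f e)) = (\<Sum>e\<in>{e\<in>E. s e \<in> Y}. f e)"
      by (rule sum.group) (use assms in auto)
    moreover have "\<And>v. v \<in> Y \<inter> V \<Longrightarrow> {x. x \<in> {e\<in>E. s e \<in> Y} \<and> s x = v} = {e\<in>E. s e \<in> {v}}"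
      by auto
    ultimately show ?thesis by simp
  qed
  have 2: "(\<Sum>v\<in>Y \<inter> V. (\<Sum>e\<in>{e\<in>E. t e \<in> {v}}. f e)) = (\<Sum>e\<in>{e\<in>E. t e \<in> Y}. f e)"
  proof -
    have "(\<Sum>v\<in>Y \<inter> V. (\<Sum>e\<in>{x. x \<in> {e\<in>E. t e \<in> Y} \<and> t x = v}. f e)) = (\<Sum>e\<in>{e\<in>E. t e \<in> Y}. f e)"
      by (rule sum.group) (use assms in auto)
    moreover have "\<And>v. v \<in> Y \<inter> V \<Longrightarrow> {x. x \<in> {e\<in>E. t e \<in> Y} \<and> t x = v} = {e\<in>E. t e \<in> {v}}"
      by auto
    ultimately show ?thesis by simp
  qed
  show ?thesis unfolding flux_def using 1 2 by (simp add: sum_subtractf)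
qed

lemma is_flow_iff:
  "is_flow V E s t Bd c f \<longleftrightarrow> (\<forall>e\<in>E. 0 \<le> f e \<and> f e \<le> c e) \<and> (\<forall>x\<in>V - Bd. flux E s t f {x} = 0)"
  unfolding is_flow_def flux_def by auto

lemma flux_restrict:
  assumes "finite E" "finite V" "\<forall>e\<in>E. s e \<in> V \<and> t e \<in> V"
    and "is_flow V E s t Bd c f"
  shows "flux E s t f U = flux E s t f (U \<inter> Bd)"
proof -
  have "flux E s t f U = (\<Sum>v\<in>U \<inter> V. flux E s t f {v})" by (rule flux_group[OF assms(1-3)])
  also have "\<dots> = (\<Sum>v\<in>(U \<inter> Bd) \<inter> V. flux E s t f {v})"
  proof (rule sum.mono_neutral_right)
    show "finite (U \<inter> V)" using assms(2) by simp
    show "U \<inter> Bd \<inter> V \<subseteq> U \<inter> V" by blast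
    show "\<forall>i\<in>U \<inter> V - U \<inter> Bd \<inter> V. flux E s t f {i} = 0"
      using assms(4) unfolding is_flow_iff by blast
  qed
  also have "\<dots> = flux E s t f (U \<inter> Bd)" by (rule flux_group[OF assms(1-3), symmetric])
  finally show ?thesis .
qed

lemma weak_duality:
  assumes "finite E" "finite V" "\<forall>e\<in>E. s e \<in> V \<and> t e \<in> V"
    and "is_flow V E s t Bd (\<lambda>_. 1) f" and "U \<inter> Bd = X"
  shows "flux E s t f X \<le> cutv E s t U"
proof -
  have "flux E s t f X = flux E s t f U" using flux_restrict[OF assms(1-4), of U] assms(5) by simp
  also have "\<dots> = (\<Sum>e\<in>E. (of_bool (s e \<in> U) - of_bool (t e \<in> U)) * f e)" by (rule flux_alt[OF assms(1)])
  also have "\<dots> \<le> cutv E s t U" unfolding cutv_def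
    by (rule sum_mono) (use assms(4) in \<open>auto simp: is_flow_def\<close>)
  finally show ?thesis .
qed

lemma zero_flow: "is_flow V E s t Bd (\<lambda>_. 1) (\<lambda>_. 0)"
  unfolding is_flow_def by simp

lemma max_flux_le:
  assumes "finite E" "finite V" "\<forall>e\<in>E. s e \<in> V \<and> t e \<in> V" and "U \<inter> Bd = X"
  shows "max_flux V E s t Bd (\<lambda>_. 1) X \<le> cutv E s t U"
  unfolding max_flux_def
  by (rule cSup_least) (use zero_flow[of V E s t Bd] weak_duality[OF assms(1-3) _ assms(4)] in auto)

lemma max_flux_ge:
  assumes "finite E" "finite V" "\<forall>e\<in>E. s e \<in> V \<and> t e \<in> V" and "is_flow V E s t Bd (\<lambda>_. 1) f"
    and XB: "X \<subseteq> Bd"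
  shows "flux E s t f X \<le> max_flux V E s t Bd (\<lambda>_. 1) X"
  unfolding max_flux_def
proof (rule cSup_upper)
  show "flux E s t f X \<in> {flux E s t f X |f. is_flow V E s t Bd (\<lambda>_. 1) f}" using assms(4) by auto
  show "bdd_above {flux E s t f X |f. is_flow V E s t Bd (\<lambda>_. 1) f}"
  proof (rule bdd_aboveI)
    fix y assume "y \<in> {flux E s t f X |f. is_flow V E s t Bd (\<lambda>_. 1) f}"
    then obtain g where g: "is_flow V E s t Bd (\<lambda>_. 1) g" "y = flux E s t g X" by blast
    have "X \<inter> Bd = X" using XB by blast
    then show "y \<le> cutv E s t X" using weak_duality[OF assms(1-3) g(1), of X X] g(2) by simp
  qed
qed

definition rtl :: "('e \<Rightarrow> real) \<Rightarrow> ('e \<Rightarrow> 'v) \<Rightarrow> ('e \<Rightarrow> 'v) \<Rightarrow> 'e \<Rightarrow> 'v" where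
  "rtl f s t e = (if f e = 0 then s e else t e)"
definition rhd :: "('e \<Rightarrow> real) \<Rightarrow> ('e \<Rightarrow> 'v) \<Rightarrow> ('e \<Rightarrow> 'v) \<Rightarrow> 'e \<Rightarrow> 'v" where
  "rhd f s t e = (if f e = 0 then t e else s e)"

fun rwalk :: "'e set \<Rightarrow> ('e \<Rightarrow> real) \<Rightarrow> ('e \<Rightarrow> 'v) \<Rightarrow> ('e \<Rightarrow> 'v) \<Rightarrow> 'v \<Rightarrow> 'e list \<Rightarrow> 'v \<Rightarrow> bool" where
  "rwalk E f s t u [] w = (u = w)"
| "rwalk E f s t u (e # es) w = (e \<in> E \<and> rtl f s t e = u \<and> rwalk E f s t (rhd f s t e) es w)"

lemma rwalk_append:
  "rwalk E f s t u (xs @ ys) w \<longleftrightarrow> (\<exists>m. rwalk E f s t u xs m \<and> rwalk E f s t m ys w)"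
  by (induction xs arbitrary: u) auto

lemma rwalk_subset: "rwalk E f s t u es w \<Longrightarrow> set es \<subseteq> E"
  by (induction es arbitrary: u) auto

lemma rwalk_tele:
  "rwalk E f s t u es w \<Longrightarrow>
    sum_list (map (\<lambda>e. of_bool (rtl f s t e \<in> Y) - of_bool (rhd f s t e \<in> Y)) es)
      = (of_bool (u \<in> Y) - of_bool (w \<in> Y) :: real)"
proof (induction es arbitrary: u)
  case Nil
  then show ?case by simp
next
  case (Cons e es)
  then have h: "rtl f s t e = u" "rwalk E f s t (rhd f s t e) es w" by simp_all
  have "sum_list (map (\<lambda>e. of_bool (rtl f s t e \<in> Y) - of_bool (rhd f s t e \<in> Y)) es)
      = (of_bool (rhd f s t e \<in> Y) - of_bool (w \<in> Y) :: real)" by (rule Cons.IH[OF h(2)])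
  then show ?case using h(1) by simp
qed

lemma reach_walk:
  assumes "(x, y) \<in> {(rtl f s t e, rhd f s t e) | e. e \<in> E}\<^sup>*"
  shows "\<exists>es. distinct es \<and> rwalk E f s t x es y"
  using assms
proof (induction rule: rtrancl_induct)
  case base then show ?case by (intro exI[of _ "[]"]) simp
next
  case (step u w)
  from step.IH obtain es where es: "distinct es" "rwalk E f s t x es u" by blast
  from step.hyps(2) obtain e where e: "e \<in> E" "u = rtl f s t e" "w = rhd f s t e" by blast
  show ?case
  proof (cases "e \<in> set es")
    case True
    then obtain xs ys where xy: "es = xs @ e # ys" by (meson split_list)
    with es have "distinct (xs @ [e])" "rwalk E f s t x (xs @ [e]) w"
      using e by (auto simp: rwalk_append)
    then show ?thesis by blast
  next
    case False
    with es e have "distinct (es @ [e])" "rwalk E f s t x (es @ [e]) w" by (auto simp: rwalk_append)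
    then show ?thesis by blast
  qed
qed

lemma flip_flux:
  assumes "finite E" "\<forall>e\<in>E. f e = 0 \<or> f e = 1" "distinct es" "rwalk E f s t x es y"
  shows "flux E s t (\<lambda>e. if e \<in> set es then 1 - f e else f e) Y
          = flux E s t f Y + of_bool (x \<in> Y) - of_bool (y \<in> Y)"
proof -
  let ?g = "\<lambda>e. if e \<in> set es then 1 - f e else f e"
  have sub: "set es \<subseteq> E" using rwalk_subset[OF assms(4)] .
  have "flux E s t ?g Y - flux E s t f Y
      = (\<Sum>e\<in>E. (of_bool (s e \<in> Y) - of_bool (t e \<in> Y)) * (?g e - f e))"
  proof -
    have "flux E s t ?g Y - flux E s t f Y
      = (\<Sum>e\<in>E. (of_bool (s e \<in> Y) - of_bool (t e \<in> Y)) * ?g e)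
        - (\<Sum>e\<in>E. (of_bool (s e \<in> Y) - of_bool (t e \<in> Y)) * f e)"
      by (simp only: flux_alt[OF assms(1)])
    also have "\<dots> = (\<Sum>e\<in>E. (of_bool (s e \<in> Y) - of_bool (t e \<in> Y)) * ?g e
        - (of_bool (s e \<in> Y) - of_bool (t e \<in> Y)) * f e)"
      by (simp only: sum_subtractf)
    finally show ?thesis by (simp only: right_diff_distrib)
  qed
  also have "\<dots> = (\<Sum>e\<in>set es. (of_bool (s e \<in> Y) - of_bool (t e \<in> Y)) * (?g e - f e))"
  proof (rule sum.mono_neutral_right)
    show "finite E" by (rule assms(1))
    show "set es \<subseteq> E" by (rule sub)
    show "\<forall>i\<in>E - set es. (of_bool (s i \<in> Y) - of_bool (t i \<in> Y)) * (?g i - f i) = 0"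
      by simp
  qed
  also have "\<dots> = (\<Sum>e\<in>set es. of_bool (rtl f s t e \<in> Y) - of_bool (rhd f s t e \<in> Y))"
  proof (rule sum.cong[OF refl])
    fix e assume "e \<in> set es"
    then have "e \<in> E" using sub by (rule rev_subsetD)
    then have "f e = 0 \<or> f e = 1" by (rule bspec[OF assms(2)])
    then show "(of_bool (s e \<in> Y) - of_bool (t e \<in> Y)) * (?g e - f e)
        = of_bool (rtl f s t e \<in> Y) - of_bool (rhd f s t e \<in> Y)"
      using \<open>e \<in> set es\<close> by (elim disjE) (simp_all add: rtl_def rhd_def)
  qed
  also have "\<dots> = sum_list (map (\<lambda>e. of_bool (rtl f s t e \<in> Y) - of_bool (rhd f s t e \<in> Y)) es)"
    by (rule sum_list_distinct_conv_sum_set[OF assms(3), symmetric])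
  also have "\<dots> = of_bool (x \<in> Y) - of_bool (y \<in> Y)" by (rule rwalk_tele[OF assms(4)])
  finally show ?thesis by linarith
qed

lemma mfmc:
  assumes fin: "finite E" "finite V" and ends: "\<forall>e\<in>E. s e \<in> V \<and> t e \<in> V" and XB: "X \<subseteq> Bd"
  shows "\<exists>f U. is_flow V E s t Bd (\<lambda>_. 1) f \<and> U \<inter> Bd = X \<and> flux E s t f X = cutv E s t U"
proof -
  define F where "F = {f \<in> PiE E (\<lambda>_. {0,1::real}). is_flow V E s t Bd (\<lambda>_. 1) f}"
  have finF: "finite F" unfolding F_def by (rule finite_subset[OF _ finite_PiE[OF fin(1), of "\<lambda>_. {0,1::real}"]]) auto
  have z: "(\<lambda>e\<in>E. 0::real) \<in> F" unfolding F_def is_flow_def by auto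
  define M where "M = Max ((\<lambda>f. flux E s t f X) ` F)"
  have "M \<in> (\<lambda>f. flux E s t f X) ` F" unfolding M_def using finF z by (intro Max_in) auto
  then obtain f where f: "f \<in> F" "flux E s t f X = M" by auto
  have fmax: "\<And>g. g \<in> F \<Longrightarrow> flux E s t g X \<le> M" unfolding M_def using finF by auto
  have f01: "\<forall>e\<in>E. f e = 0 \<or> f e = 1" using f(1) by (auto simp: F_def PiE_iff)
  have fflow: "is_flow V E s t Bd (\<lambda>_. 1) f" using f(1) by (auto simp: F_def)
  define R where "R = {(rtl f s t e, rhd f s t e) | e. e \<in> E}"
  define U where "U = {w. \<exists>x\<in>X. (x, w) \<in> R\<^sup>*}"
  have UB: "U \<inter> Bd = X"
  proof
    show "X \<subseteq> U \<inter> Bd" using XB unfolding U_def by auto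
    show "U \<inter> Bd \<subseteq> X"
    proof
      fix y assume y: "y \<in> U \<inter> Bd"
      show "y \<in> X"
      proof (rule ccontr)
        assume ny: "y \<notin> X"
        from y obtain x where x: "x \<in> X" "(x,y) \<in> R\<^sup>*" unfolding U_def by blast
        have "\<exists>es. distinct es \<and> rwalk E f s t x es y"
          by (rule reach_walk) (use x(2) in \<open>simp add: R_def\<close>)
        then obtain es where es: "distinct es" "rwalk E f s t x es y" by blast
        define g where "g = (\<lambda>e. if e \<in> set es then 1 - f e else f e)"
        have gfl: "\<And>Y. flux E s t g Y = flux E s t f Y + of_bool (x \<in> Y) - of_bool (y \<in> Y)"
          unfolding g_def by (rule flip_flux[OF fin(1) f01 es])
        have "g \<in> F"
        proof -
          have sub: "set es \<subseteq> E" using rwalk_subset[OF es(2)] .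
          have "g \<in> PiE E (\<lambda>_. {0,1})" using f(1) sub f01 unfolding F_def g_def
            by (auto simp: PiE_iff extensional_def)
          moreover have "is_flow V E s t Bd (\<lambda>_. 1) g"
            unfolding is_flow_iff
          proof (intro conjI ballI)
            fix e assume "e \<in> E" then show "0 \<le> g e" "g e \<le> 1" using f01 unfolding g_def by auto
          next
            fix v assume v: "v \<in> V - Bd"
            then have "x \<noteq> v" "y \<noteq> v" using x XB y by auto
            then show "flux E s t g {v} = 0" using gfl[of "{v}"] fflow v unfolding is_flow_iff by auto
          qed
          ultimately show ?thesis unfolding F_def by blast
        qed
        then have "flux E s t g X \<le> M" by (rule fmax)
        moreover have "flux E s t g X = M + 1" using gfl[of X] x(1) ny f(2) by simp
        ultimately show False by simp
      qed
    qed
  qed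
  have cl: "\<And>a b. a \<in> U \<Longrightarrow> (a, b) \<in> R \<Longrightarrow> b \<in> U" unfolding U_def
    using rtrancl.rtrancl_into_rtrancl by fastforce
  have "flux E s t f X = flux E s t f U" using flux_restrict[OF fin ends fflow, of U] UB by simp
  also have "\<dots> = (\<Sum>e\<in>E. (of_bool (s e \<in> U) - of_bool (t e \<in> U)) * f e)" by (rule flux_alt[OF fin(1)])
  also have "\<dots> = cutv E s t U" unfolding cutv_def
  proof (rule sum.cong[OF refl])
    fix e assume e: "e \<in> E"
    have Rc: "(rtl f s t e, rhd f s t e) \<in> R" using e unfolding R_def by blast
    show "(of_bool (s e \<in> U) - of_bool (t e \<in> U)) * f e = of_bool (s e \<in> U \<and> t e \<notin> U)"
      using f01 e cl[OF _ Rc] unfolding rtl_def rhd_def by (cases "f e = 0") auto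
  qed
  finally show ?thesis using fflow UB by blast
qed

lemma pw:
  fixes a1 a2 a3 b c1 c2 c3 d :: bool
  assumes "b \<Longrightarrow> (a1 \<and> a2 \<and> \<not> a3) \<or> (a1 \<and> a3 \<and> \<not> a2) \<or> (a2 \<and> a3 \<and> \<not> a1) \<or> (\<not> a1 \<and> \<not> a2 \<and> \<not> a3)"
    and "d \<Longrightarrow> (c1 \<and> c2 \<and> \<not> c3) \<or> (c1 \<and> c3 \<and> \<not> c2) \<or> (c2 \<and> c3 \<and> \<not> c1) \<or> (\<not> c1 \<and> \<not> c2 \<and> \<not> c3)"
  shows "(0::real) \<le> of_bool (a1 \<and> \<not> c1) + of_bool (a2 \<and> \<not> c2) + of_bool (a3 \<and> \<not> c3)
     - of_bool ((a1 \<and> a2 \<and> \<not> a3) \<and> \<not> (c1 \<and> c2 \<and> \<not> c3))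
     - of_bool ((a1 \<and> a3 \<and> \<not> a2) \<and> \<not> (c1 \<and> c3 \<and> \<not> c2))
     - of_bool ((a2 \<and> a3 \<and> \<not> a1) \<and> \<not> (c2 \<and> c3 \<and> \<not> c1))
     - of_bool ((a1 \<or> a2 \<or> a3) \<and> \<not> (c1 \<or> c2 \<or> c3))
     - (of_bool (a1 \<and> a2 \<and> a3 \<and> \<not> b) - of_bool (c1 \<and> c2 \<and> c3 \<and> \<not> d))"
  using assms
  by (cases a1; cases a2; cases a3; cases b; cases c1; cases c2; cases c3; cases d; simp)

theorem theorem5:
  fixes V :: "'v set" and E :: "'e set" and s t :: "'e \<Rightarrow> 'v"
    and Bd A B C D :: "'v set"
  assumes "finite V" and "finite E"
    and "\<forall>e\<in>E. s e \<in> V \<and> t e \<in> V"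
    and "Bd \<subseteq> V"
    and "Bd = A \<union> B \<union> C \<union> D"
    and "A \<inter> B = {}" "A \<inter> C = {}" "A \<inter> D = {}"
    and "B \<inter> C = {}" "B \<inter> D = {}" "C \<inter> D = {}"
    and "inner_superbalanced V E s t Bd (\<lambda>_. 1)"
  shows "let S = max_flux V E s t Bd (\<lambda>_. 1) in
    S (A \<union> B) + S (A \<union> C) + S (B \<union> C) - S A - S B - S C - S (A \<union> B \<union> C) \<ge> 0"
proof -
  note fin = assms(2) assms(1)
  note ends = assms(3)
  let ?S = "max_flux V E s t Bd (\<lambda>_. 1)"
  have ABsub: "A \<union> B \<subseteq> Bd" "A \<union> C \<subseteq> Bd" "B \<union> C \<subseteq> Bd" using assms(5) by blast+
  obtain f1 U1 where f1: "is_flow V E s t Bd (\<lambda>_. 1) f1" "U1 \<inter> Bd = A \<union> B" "flux E s t f1 (A \<union> B) = cutv E s t U1"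
    using mfmc[OF fin ends ABsub(1)] by blast
  obtain f2 U2 where f2: "is_flow V E s t Bd (\<lambda>_. 1) f2" "U2 \<inter> Bd = A \<union> C" "flux E s t f2 (A \<union> C) = cutv E s t U2"
    using mfmc[OF fin ends ABsub(2)] by blast
  obtain f3 U3 where f3: "is_flow V E s t Bd (\<lambda>_. 1) f3" "U3 \<inter> Bd = B \<union> C" "flux E s t f3 (B \<union> C) = cutv E s t U3"
    using mfmc[OF fin ends ABsub(3)] by blast
  have S1: "cutv E s t U1 \<le> ?S (A \<union> B)" using max_flux_ge[OF fin ends f1(1) ABsub(1)] f1(3) by simp
  have S2: "cutv E s t U2 \<le> ?S (A \<union> C)" using max_flux_ge[OF fin ends f2(1) ABsub(2)] f2(3) by simp
  have S3: "cutv E s t U3 \<le> ?S (B \<union> C)" using max_flux_ge[OF fin ends f3(1) ABsub(3)] f3(3) by simp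
  define WA where "WA = U1 \<inter> U2 - U3"
  define WB where "WB = U1 \<inter> U3 - U2"
  define WC where "WC = U2 \<inter> U3 - U1"
  define W where "W = U1 \<union> U2 \<union> U3"
  define T where "T = U1 \<inter> U2 \<inter> U3 - Bd"
  have m1: "\<And>v. v \<in> Bd \<Longrightarrow> v \<in> U1 \<longleftrightarrow> v \<in> A \<or> v \<in> B" using f1(2) by blast
  have m2: "\<And>v. v \<in> Bd \<Longrightarrow> v \<in> U2 \<longleftrightarrow> v \<in> A \<or> v \<in> C" using f2(2) by blast
  have m3: "\<And>v. v \<in> Bd \<Longrightarrow> v \<in> U3 \<longleftrightarrow> v \<in> B \<or> v \<in> C" using f3(2) by blast
  have WAB: "WA \<inter> Bd = A"
  proof (intro set_eqI iffI)
    fix v assume "v \<in> WA \<inter> Bd" then show "v \<in> A" unfolding WA_def using m1 m2 m3 assms(9) by blast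
  next
    fix v assume "v \<in> A" then show "v \<in> WA \<inter> Bd" unfolding WA_def using m1 m2 m3 assms(5,6,7) by blast
  qed
  have WBB: "WB \<inter> Bd = B"
  proof (intro set_eqI iffI)
    fix v assume "v \<in> WB \<inter> Bd" then show "v \<in> B" unfolding WB_def using m1 m2 m3 assms(7) by blast
  next
    fix v assume "v \<in> B" then show "v \<in> WB \<inter> Bd" unfolding WB_def using m1 m2 m3 assms(5,6,9) by blast
  qed
  have WCB: "WC \<inter> Bd = C"
  proof (intro set_eqI iffI)
    fix v assume "v \<in> WC \<inter> Bd" then show "v \<in> C" unfolding WC_def using m1 m2 m3 assms(6) by blast
  next
    fix v assume "v \<in> C" then show "v \<in> WC \<inter> Bd" unfolding WC_def using m1 m2 m3 assms(5,7,9) by blast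
  qed
  have WB': "W \<inter> Bd = A \<union> B \<union> C"
    unfolding W_def using f1(2) f2(2) f3(2) by blast
  have SA: "?S A \<le> cutv E s t WA" by (rule max_flux_le[OF fin ends WAB])
  have SB: "?S B \<le> cutv E s t WB" by (rule max_flux_le[OF fin ends WBB])
  have SC: "?S C \<le> cutv E s t WC" by (rule max_flux_le[OF fin ends WCB])
  have SW: "?S (A \<union> B \<union> C) \<le> cutv E s t W" by (rule max_flux_le[OF fin ends WB'])
  have pat: "(v \<in> U1 \<and> v \<in> U2 \<and> v \<notin> U3) \<or> (v \<in> U1 \<and> v \<in> U3 \<and> v \<notin> U2)
      \<or> (v \<in> U2 \<and> v \<in> U3 \<and> v \<notin> U1) \<or> (v \<notin> U1 \<and> v \<notin> U2 \<and> v \<notin> U3)" if "v \<in> Bd" for v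
  proof -
    have "v \<in> A \<or> v \<in> B \<or> v \<in> C \<or> v \<in> D" using that assms(5) by blast
    then show ?thesis using m1[OF that] m2[OF that] m3[OF that] assms(6-11) by blast
  qed
  have T0: "0 \<le> flux E s t (\<lambda>_. 1) T"
  proof -
    have "flux E s t (\<lambda>_. 1) T = (\<Sum>v\<in>T \<inter> V. flux E s t (\<lambda>_. 1) {v})" by (rule flux_group[OF fin ends])
    also have "\<dots> \<ge> 0"
    proof (rule sum_nonneg)
      fix v assume v: "v \<in> T \<inter> V"
      then have "v \<in> V - Bd" unfolding T_def by blast
      then show "0 \<le> flux E s t (\<lambda>_. 1) {v}"
        using assms(12) unfolding inner_superbalanced_def flux_def by auto
    qed
    finally show ?thesis .
  qed
  have key: "(0::real) \<le> (\<Sum>e\<in>E. of_bool (s e \<in> U1 \<and> t e \<notin> U1) + of_bool (s e \<in> U2 \<and> t e \<notin> U2)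
       + of_bool (s e \<in> U3 \<and> t e \<notin> U3)
     - of_bool (s e \<in> WA \<and> t e \<notin> WA) - of_bool (s e \<in> WB \<and> t e \<notin> WB)
     - of_bool (s e \<in> WC \<and> t e \<notin> WC) - of_bool (s e \<in> W \<and> t e \<notin> W)
     - (of_bool (s e \<in> T) - of_bool (t e \<in> T)) * 1)"
  proof (rule sum_nonneg)
    fix e assume e: "e \<in> E"
    have "(0::real) \<le> of_bool (s e \<in> U1 \<and> \<not> t e \<in> U1) + of_bool (s e \<in> U2 \<and> \<not> t e \<in> U2) + of_bool (s e \<in> U3 \<and> \<not> t e \<in> U3)
     - of_bool ((s e \<in> U1 \<and> s e \<in> U2 \<and> \<not> s e \<in> U3) \<and> \<not> (t e \<in> U1 \<and> t e \<in> U2 \<and> \<not> t e \<in> U3))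
     - of_bool ((s e \<in> U1 \<and> s e \<in> U3 \<and> \<not> s e \<in> U2) \<and> \<not> (t e \<in> U1 \<and> t e \<in> U3 \<and> \<not> t e \<in> U2))
     - of_bool ((s e \<in> U2 \<and> s e \<in> U3 \<and> \<not> s e \<in> U1) \<and> \<not> (t e \<in> U2 \<and> t e \<in> U3 \<and> \<not> t e \<in> U1))
     - of_bool ((s e \<in> U1 \<or> s e \<in> U2 \<or> s e \<in> U3) \<and> \<not> (t e \<in> U1 \<or> t e \<in> U2 \<or> t e \<in> U3))
     - (of_bool (s e \<in> U1 \<and> s e \<in> U2 \<and> s e \<in> U3 \<and> \<not> s e \<in> Bd) - of_bool (t e \<in> U1 \<and> t e \<in> U2 \<and> t e \<in> U3 \<and> \<not> t e \<in> Bd))"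
      by (rule pw) (use pat in auto)
    then show "0 \<le> of_bool (s e \<in> U1 \<and> t e \<notin> U1) + of_bool (s e \<in> U2 \<and> t e \<notin> U2)
       + of_bool (s e \<in> U3 \<and> t e \<notin> U3)
     - of_bool (s e \<in> WA \<and> t e \<notin> WA) - of_bool (s e \<in> WB \<and> t e \<notin> WB)
     - of_bool (s e \<in> WC \<and> t e \<notin> WC) - of_bool (s e \<in> W \<and> t e \<notin> W)
     - (of_bool (s e \<in> T) - of_bool (t e \<in> T)) * (1::real)"
      unfolding WA_def WB_def WC_def W_def T_def by simp
  qed
  also have "\<dots> = cutv E s t U1 + cutv E s t U2 + cutv E s t U3 - cutv E s t WA - cutv E s t WB
      - cutv E s t WC - cutv E s t W - flux E s t (\<lambda>_. 1) T"
    unfolding cutv_def flux_alt[OF fin(1)] by (simp only: sum.distrib sum_subtractf)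
  finally have "0 \<le> cutv E s t U1 + cutv E s t U2 + cutv E s t U3 - cutv E s t WA - cutv E s t WB
      - cutv E s t WC - cutv E s t W - flux E s t (\<lambda>_. 1) T" .
  then show ?thesis unfolding Let_def using S1 S2 S3 SA SB SC SW T0 by linarith
qed

end
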